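(* Let $k$ be a positive integer and $F$ a 2-factor on $n$ vertices. Then there exists a partition of $V(F)$ into parts $U_0,U_1,\dots,U_{\lfloor n/k\rfloor}$ such that $|U_i|=k$ for all $1\le i\le\lfloor n/k\rfloor$ (hence $|U_0|<k$), and such that for every $0\le i\le\lfloor n/k\rfloor$, the subgraph of $F$ induced by $U_i$ is a disjoint union of cycles and at most $2$ paths. In particular, for every $1\le i\le\lfloor n/k\rfloor$, $F[U_i]$ contains at least $k-2$ edges.
   Context: A 2-factor on $n$ vertices is a 2-regular graph on $n$ vertices. *)

theory Defs
  imports Main
begin

definition simple_graph :: "'a set \<Rightarrow> 'a set set \<Rightarrow> bool" where
  "simple_graph V E \<longleftrightarrow> finite V \<and>
     (\<forall>e\<in>E. \<exists>u v. u \<noteq> v \<and> e = {u, v} \<and> u \<in> V \<and> v \<in> V)"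

definition degree :: "'a set set \<Rightarrow> 'a \<Rightarrow> nat" where
  "degree E v = card {e \<in> E. v \<in> e}"

definition two_factor :: "'a set \<Rightarrow> 'a set set \<Rightarrow> bool" where
  "two_factor V E \<longleftrightarrow> simple_graph V E \<and> (\<forall>v\<in>V. degree E v = 2)"

definition induced_edges :: "'a set set \<Rightarrow> 'a set \<Rightarrow> 'a set set" where
  "induced_edges E U = {e \<in> E. e \<subseteq> U}"

definition is_path_on :: "'a set set \<Rightarrow> 'a set \<Rightarrow> bool" where
  "is_path_on E C \<longleftrightarrow> (\<exists>vs. vs \<noteq> [] \<and> distinct vs \<and> set vs = C \<and>
     induced_edges E C = {{vs ! i, vs ! (i + 1)} | i. i + 1 < length vs})"

definition is_cycle_on :: "'a set set \<Rightarrow> 'a set \<Rightarrow> bool" where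
  "is_cycle_on E C \<longleftrightarrow> (\<exists>vs. length vs \<ge> 3 \<and> distinct vs \<and> set vs = C \<and>
     induced_edges E C = {{vs ! i, vs ! ((i + 1) mod length vs)} | i. i < length vs})"

definition cycles_and_two_paths :: "'a set set \<Rightarrow> 'a set \<Rightarrow> bool" where
  "cycles_and_two_paths E U \<longleftrightarrow> (\<exists>Cs Ps.
     finite Cs \<and> finite Ps \<and> Cs \<inter> Ps = {} \<and> card Ps \<le> 2 \<and>
     \<Union>(Cs \<union> Ps) = U \<and>
     (\<forall>A\<in>Cs \<union> Ps. \<forall>B\<in>Cs \<union> Ps. A \<noteq> B \<longrightarrow> A \<inter> B = {}) \<and>
     (\<forall>e\<in>induced_edges E U. \<exists>A\<in>Cs \<union> Ps. e \<subseteq> A) \<and>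
     (\<forall>A\<in>Cs. is_cycle_on E A) \<and> (\<forall>A\<in>Ps. is_path_on E A))"

end

theory Submission
  imports Defs
begin

definition cpm :: "'a set set \<Rightarrow> 'a set \<Rightarrow> nat \<Rightarrow> bool" where
  "cpm E U m \<longleftrightarrow> (\<exists>Cs Ps.
     finite Cs \<and> finite Ps \<and> Cs \<inter> Ps = {} \<and> card Ps \<le> m \<and>
     \<Union>(Cs \<union> Ps) = U \<and>
     (\<forall>A\<in>Cs \<union> Ps. \<forall>B\<in>Cs \<union> Ps. A \<noteq> B \<longrightarrow> A \<inter> B = {}) \<and>
     (\<forall>e\<in>induced_edges E U. \<exists>A\<in>Cs \<union> Ps. e \<subseteq> A) \<and>
     (\<forall>A\<in>Cs. is_cycle_on E A) \<and> (\<forall>A\<in>Ps. is_path_on E A))"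

lemma cpm_2: "cpm E U 2 = cycles_and_two_paths E U"
  unfolding cpm_def cycles_and_two_paths_def by simp

lemma cpm_mono: "cpm E U m \<Longrightarrow> m \<le> m' \<Longrightarrow> cpm E U m'"
proof -
  assume "cpm E U m" "m \<le> m'"
  then show ?thesis unfolding cpm_def
    by (elim exE conjE, intro exI conjI) (assumption | erule order_trans, assumption)+
qed

lemma cpm_empty: "{} \<notin> E \<Longrightarrow> cpm E {} m"
  unfolding cpm_def induced_edges_def
  by (rule exI[of _ "{}"], rule exI[of _ "{}"]) auto

lemma cycle_ne: "is_cycle_on E X \<Longrightarrow> X \<noteq> {}"
  unfolding is_cycle_on_def by auto

lemma path_ne: "is_path_on E X \<Longrightarrow> X \<noteq> {}"
  unfolding is_path_on_def by auto

lemma cpm_union: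
  assumes ne: "{} \<notin> E" and a: "cpm E A m1" and b: "cpm E B m2" and dj: "A \<inter> B = {}"
    and sep: "\<forall>e\<in>E. e \<subseteq> A \<union> B \<longrightarrow> e \<subseteq> A \<or> e \<subseteq> B"
  shows "cpm E (A \<union> B) (m1 + m2)"
proof -
  obtain Cs1 Ps1 where 1: "finite Cs1" "finite Ps1" "Cs1 \<inter> Ps1 = {}" "card Ps1 \<le> m1"
     "\<Union>(Cs1 \<union> Ps1) = A"
     "(\<forall>X\<in>Cs1 \<union> Ps1. \<forall>Y\<in>Cs1 \<union> Ps1. X \<noteq> Y \<longrightarrow> X \<inter> Y = {})"
     "(\<forall>e\<in>induced_edges E A. \<exists>X\<in>Cs1 \<union> Ps1. e \<subseteq> X)"
     "(\<forall>X\<in>Cs1. is_cycle_on E X)" "(\<forall>X\<in>Ps1. is_path_on E X)"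
    using a unfolding cpm_def by blast
  obtain Cs2 Ps2 where 2: "finite Cs2" "finite Ps2" "Cs2 \<inter> Ps2 = {}" "card Ps2 \<le> m2"
     "\<Union>(Cs2 \<union> Ps2) = B"
     "(\<forall>X\<in>Cs2 \<union> Ps2. \<forall>Y\<in>Cs2 \<union> Ps2. X \<noteq> Y \<longrightarrow> X \<inter> Y = {})"
     "(\<forall>e\<in>induced_edges E B. \<exists>X\<in>Cs2 \<union> Ps2. e \<subseteq> X)"
     "(\<forall>X\<in>Cs2. is_cycle_on E X)" "(\<forall>X\<in>Ps2. is_path_on E X)"
    using b unfolding cpm_def by blast
  have nz: "X \<noteq> {}" if "X \<in> Cs1 \<union> Ps1 \<union> Cs2 \<union> Ps2" for X
    using that 1(8,9) 2(8,9) cycle_ne path_ne by blast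
  have sA: "X \<subseteq> A" if "X \<in> Cs1 \<union> Ps1" for X using that 1(5) by blast
  have sB: "X \<subseteq> B" if "X \<in> Cs2 \<union> Ps2" for X using that 2(5) by blast
  have cross: "X \<inter> Y = {}" if "X \<in> Cs1 \<union> Ps1" "Y \<in> Cs2 \<union> Ps2" for X Y
    using sA[OF that(1)] sB[OF that(2)] dj by blast
  have neq: "X \<noteq> Y" if "X \<in> Cs1 \<union> Ps1" "Y \<in> Cs2 \<union> Ps2" for X Y
    using cross[OF that] nz that by blast
  show ?thesis unfolding cpm_def
  proof (rule exI[of _ "Cs1 \<union> Cs2"], rule exI[of _ "Ps1 \<union> Ps2"], intro conjI)
    show "finite (Cs1 \<union> Cs2)" "finite (Ps1 \<union> Ps2)" using 1 2 by auto
    show "(Cs1 \<union> Cs2) \<inter> (Ps1 \<union> Ps2) = {}" using 1(3) 2(3) neq by blast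
    have "card (Ps1 \<union> Ps2) \<le> card Ps1 + card Ps2" by (rule card_Un_le)
    then show "card (Ps1 \<union> Ps2) \<le> m1 + m2" using 1(4) 2(4) by linarith
    show "\<Union>(Cs1 \<union> Cs2 \<union> (Ps1 \<union> Ps2)) = A \<union> B" using 1(5) 2(5) by blast
    show "\<forall>X\<in>Cs1 \<union> Cs2 \<union> (Ps1 \<union> Ps2). \<forall>Y\<in>Cs1 \<union> Cs2 \<union> (Ps1 \<union> Ps2). X \<noteq> Y \<longrightarrow> X \<inter> Y = {}"
      using 1(6) 2(6) cross by blast
    show "\<forall>e\<in>induced_edges E (A \<union> B). \<exists>X\<in>Cs1 \<union> Cs2 \<union> (Ps1 \<union> Ps2). e \<subseteq> X"
    proof
      fix e assume "e \<in> induced_edges E (A \<union> B)"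
      then have "e \<in> E" "e \<subseteq> A \<union> B" unfolding induced_edges_def by auto
      then have "e \<in> induced_edges E A \<or> e \<in> induced_edges E B"
        using sep unfolding induced_edges_def by auto
      then show "\<exists>X\<in>Cs1 \<union> Cs2 \<union> (Ps1 \<union> Ps2). e \<subseteq> X" using 1(7) 2(7) by blast
    qed
    show "\<forall>X\<in>Cs1 \<union> Cs2. is_cycle_on E X" using 1(8) 2(8) by blast
    show "\<forall>X\<in>Ps1 \<union> Ps2. is_path_on E X" using 1(9) 2(9) by blast
  qed
qed

definition cyc_edges :: "'a list \<Rightarrow> 'a set set" where
  "cyc_edges c = {{c ! i, c ! ((i + 1) mod length c)} | i. i < length c}"

definition good_cycle :: "'a set set \<Rightarrow> 'a list \<Rightarrow> bool" where
  "good_cycle E c \<longleftrightarrow> 3 \<le> length c \<and> distinct c \<and> {e \<in> E. e \<inter> set c \<noteq> {}} = cyc_edges c"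

lemma cyc_edges_sub: "e \<in> cyc_edges c \<Longrightarrow> e \<subseteq> set c"
proof -
  assume "e \<in> cyc_edges c"
  then obtain i where i: "i < length c" "e = {c ! i, c ! ((i + 1) mod length c)}"
    unfolding cyc_edges_def by blast
  then have "0 < length c" by linarith
  then have "(i + 1) mod length c < length c" by simp
  then show ?thesis using i by auto
qed

lemma good_cycle_E: "good_cycle E c \<Longrightarrow> cyc_edges c \<subseteq> E"
  unfolding good_cycle_def by blast

lemma good_cycle_touch: "good_cycle E c \<Longrightarrow> e \<in> E \<Longrightarrow> x \<in> e \<Longrightarrow> x \<in> set c \<Longrightarrow> e \<in> cyc_edges c"
  unfolding good_cycle_def by blast

lemma good_cycle_on:
  assumes ne: "{} \<notin> E" and g: "good_cycle E c"
  shows "is_cycle_on E (set c)"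
proof -
  have "induced_edges E (set c) = cyc_edges c"
  proof
    show "induced_edges E (set c) \<subseteq> cyc_edges c"
    proof
      fix e assume "e \<in> induced_edges E (set c)"
      then have e: "e \<in> E" "e \<subseteq> set c" unfolding induced_edges_def by auto
      then have "e \<noteq> {}" using ne by blast
      then obtain x where "x \<in> e" by blast
      with e show "e \<in> cyc_edges c" using good_cycle_touch[OF g] by blast
    qed
    show "cyc_edges c \<subseteq> induced_edges E (set c)"
      using good_cycle_E[OF g] cyc_edges_sub unfolding induced_edges_def by blast
  qed
  then show ?thesis using g unfolding is_cycle_on_def good_cycle_def cyc_edges_def by blast
qed

lemma cpm_cycle: "{} \<notin> E \<Longrightarrow> good_cycle E c \<Longrightarrow> cpm E (set c) m"
  unfolding cpm_def
  by (rule exI[of _ "{set c}"], rule exI[of _ "{}"]) (auto simp: good_cycle_on induced_edges_def)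

lemma good_cycle_sep:
  assumes g: "good_cycle E c" and "A \<subseteq> set c" and "B \<inter> set c = {}"
  shows "\<forall>e\<in>E. e \<subseteq> A \<union> B \<longrightarrow> e \<subseteq> A \<or> e \<subseteq> B"
proof (intro ballI impI)
  fix e assume e: "e \<in> E" "e \<subseteq> A \<union> B"
  show "e \<subseteq> A \<or> e \<subseteq> B"
  proof (cases "e \<subseteq> B")
    case False
    then obtain x where "x \<in> e" "x \<in> A" using e by blast
    then have "e \<in> cyc_edges c" using good_cycle_touch[OF g e(1)] assms(2) by blast
    then have "e \<subseteq> set c" by (rule cyc_edges_sub)
    then show ?thesis using e assms by blast
  qed simp
qed

lemma arc_path:
  assumes ne: "{} \<notin> E" and g: "good_cycle E c" and a: "a < length c"
    and nf: "\<not> (a = 0 \<and> length c \<le> l)" and l: "0 < l"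
  shows "is_path_on E (set (take l (drop a c)))"
proof -
  let ?L = "length c"
  define l' where "l' = min l (?L - a)"
  define vs where "vs = take l (drop a c)"
  have len: "length vs = l'" unfolding vs_def l'_def by simp
  have l'pos: "0 < l'" using a l unfolding l'_def by simp
  have al: "a + l' \<le> ?L" unfolding l'_def using a by simp
  have nth: "vs ! t = c ! (a + t)" if "t < l'" for t
    using that al unfolding vs_def l'_def by simp
  have dc: "distinct c" using g unfolding good_cycle_def by simp
  have dvs: "distinct vs" unfolding vs_def using dc by simp
  have mem: "c ! i \<in> set vs \<longleftrightarrow> a \<le> i \<and> i < a + l'" if "i < ?L" for i
  proof
    assume "c ! i \<in> set vs"
    then obtain t where t: "t < l'" "vs ! t = c ! i" using len by (auto simp: in_set_conv_nth)
    then have "c ! (a + t) = c ! i" using nth by simp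
    then have "a + t = i" using dc that t al nth_eq_iff_index_eq by fastforce
    then show "a \<le> i \<and> i < a + l'" using t by simp
  next
    assume "a \<le> i \<and> i < a + l'"
    then have "vs ! (i - a) = c ! i" "i - a < l'" using nth[of "i - a"] by auto
    then show "c ! i \<in> set vs" using len by (metis nth_mem)
  qed
  have "induced_edges E (set vs) = {{vs ! i, vs ! (i + 1)} | i. i + 1 < length vs}"
  proof
    show "induced_edges E (set vs) \<subseteq> {{vs ! i, vs ! (i + 1)} | i. i + 1 < length vs}"
    proof
      fix e assume "e \<in> induced_edges E (set vs)"
      then have e: "e \<in> E" "e \<subseteq> set vs" unfolding induced_edges_def by auto
      then have "e \<noteq> {}" using ne by blast
      then obtain x where "x \<in> e" by blast
      moreover have "set vs \<subseteq> set c" unfolding vs_def by (meson set_drop_subset set_take_subset subset_trans)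
      ultimately have "e \<in> cyc_edges c" using good_cycle_touch[OF g e(1)] e(2) by blast
      then obtain i where i: "i < ?L" "e = {c ! i, c ! ((i + 1) mod ?L)}" unfolding cyc_edges_def by blast
      have ci: "a \<le> i \<and> i < a + l'" using mem[OF i(1)] i e(2) by blast
      show "e \<in> {{vs ! i, vs ! (i + 1)} | i. i + 1 < length vs}"
      proof (cases "i + 1 < ?L")
        case True
        then have m1: "(i + 1) mod ?L = i + 1" by simp
        then have "a \<le> i + 1 \<and> i + 1 < a + l'" using mem[OF True] i e(2) by auto
        then have "e = {vs ! (i - a), vs ! (i - a + 1)}" "i - a + 1 < length vs"
          using i ci nth[of "i - a"] nth[of "i - a + 1"] len m1 by auto
        then show ?thesis by blast
      next
        case False
        then have "i + 1 = ?L" using i by simp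
        then have "(i + 1) mod ?L = 0" by simp
        then have "c ! 0 \<in> set vs" using i e(2) by auto
        moreover have L0: "0 < ?L" using a by linarith
        ultimately have "a \<le> 0" using mem[OF L0] by simp
        then have "a = 0" by simp
        then have "l' = ?L" using ci \<open>i + 1 = ?L\<close> al by simp
        then show ?thesis using nf \<open>a = 0\<close> unfolding l'_def by simp
      qed
    qed
    show "{{vs ! i, vs ! (i + 1)} | i. i + 1 < length vs} \<subseteq> induced_edges E (set vs)"
    proof
      fix e assume "e \<in> {{vs ! i, vs ! (i + 1)} | i. i + 1 < length vs}"
      then obtain t where t: "t + 1 < l'" "e = {vs ! t, vs ! (t + 1)}" using len by blast
      then have "e = {c ! (a + t), c ! ((a + t + 1) mod ?L)}" using nth al by simp
      moreover have "a + t < ?L" using t al by simp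
      ultimately have "e \<in> cyc_edges c" unfolding cyc_edges_def by blast
      then have "e \<in> E" using good_cycle_E[OF g] by blast
      moreover have "e \<subseteq> set vs" using t len by simp
      ultimately show "e \<in> induced_edges E (set vs)" unfolding induced_edges_def by blast
    qed
  qed
  then show ?thesis unfolding is_path_on_def vs_def[symmetric] using dvs len l'pos by auto
qed

lemma cpm_piece:
  assumes ne: "{} \<notin> E" and g: "good_cycle E c"
  shows "cpm E (set (take l (drop a c))) 1"
proof (cases "a < length c \<and> 0 < l")
  case False
  then have X: "take l (drop a c) = []" by (cases "l = 0") auto
  show ?thesis by (simp only: X set_simps) (rule cpm_empty[OF ne])
next
  case True
  show ?thesis
  proof (cases "a = 0 \<and> length c \<le> l")
    case True
    then have "take l (drop a c) = c" by simp
    then show ?thesis using cpm_cycle[OF ne g] by simp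
  next
    case False
    then have p: "is_path_on E (set (take l (drop a c)))"
      using arc_path[OF ne g] \<open>a < length c \<and> 0 < l\<close> by blast
    show ?thesis unfolding cpm_def
      by (rule exI[of _ "{}"], rule exI[of _ "{set (take l (drop a c))}"])
         (use p in \<open>auto simp: induced_edges_def\<close>)
  qed
qed

definition cdec :: "'a set set \<Rightarrow> 'a list list \<Rightarrow> bool" where
  "cdec E cs \<longleftrightarrow> (\<forall>c\<in>set cs. good_cycle E c) \<and> distinct (concat cs)"

lemma cdec_Cons: "cdec E (c # cs) \<Longrightarrow> cdec E cs \<and> good_cycle E c \<and> set c \<inter> set (concat cs) = {}"
  unfolding cdec_def by auto

lemma cpm_prefix:
  assumes ne: "{} \<notin> E"
  shows "cdec E cs \<Longrightarrow> cpm E (set (take l (concat cs))) 1"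
proof (induction cs arbitrary: l)
  case Nil
  then show ?case using cpm_empty[OF ne] by simp
next
  case (Cons c cs)
  note h = cdec_Cons[OF Cons.prems]
  have h1: "cdec E cs" and h2: "good_cycle E c" and h3: "set c \<inter> set (concat cs) = {}"
    using h by auto
  show ?case
  proof (cases "length c \<le> l")
    case True
    then have eq: "set (take l (concat (c # cs))) = set c \<union> set (take (l - length c) (concat cs))"
      by simp
    have dj: "set (take (l - length c) (concat cs)) \<inter> set c = {}"
      using h by (meson disjoint_iff in_set_takeD)
    have "cpm E (set c \<union> set (take (l - length c) (concat cs))) (0 + 1)"
      by (rule cpm_union[OF ne cpm_cycle[OF ne h2] Cons.IH[OF h1] _ good_cycle_sep[OF h2]])
         (use dj in auto)
    then show ?thesis using eq by simp
  next
    case False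
    then have "set (take l (concat (c # cs))) = set (take l (drop 0 c))" by simp
    then show ?thesis using cpm_piece[OF ne h2, of l 0] by simp
  qed
qed

lemma cpm_segment:
  assumes ne: "{} \<notin> E"
  shows "cdec E cs \<Longrightarrow> cpm E (set (take l (drop a (concat cs)))) 2"
proof (induction cs arbitrary: a l)
  case Nil
  then show ?case using cpm_empty[OF ne] by simp
next
  case (Cons c cs)
  note h = cdec_Cons[OF Cons.prems]
  have h1: "cdec E cs" and h2: "good_cycle E c" and h3: "set c \<inter> set (concat cs) = {}"
    using h by auto
  show ?case
  proof (cases "length c \<le> a")
    case True
    then have "take l (drop a (concat (c # cs))) = take l (drop (a - length c) (concat cs))" by simp
    then show ?thesis using Cons.IH h by simp
  next
    case False
    then have eq: "set (take l (drop a (concat (c # cs)))) =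
       set (take l (drop a c)) \<union> set (take (l - (length c - a)) (concat cs))" by simp
    have dj: "set (take l (drop a c)) \<inter> set (take (l - (length c - a)) (concat cs)) = {}"
      using h by (meson disjoint_iff in_set_takeD in_set_dropD)
    have sub: "set (take l (drop a c)) \<subseteq> set c"
      by (meson set_drop_subset set_take_subset subset_trans)
    have dj2: "set (take (l - (length c - a)) (concat cs)) \<inter> set c = {}"
      using h by (meson disjoint_iff in_set_takeD)
    have "cpm E (set (take l (drop a c)) \<union> set (take (l - (length c - a)) (concat cs))) (1 + 1)"
      by (rule cpm_union[OF ne cpm_piece[OF ne h2] cpm_prefix[OF ne h1] dj good_cycle_sep[OF h2 sub dj2]])
    then show ?thesis using eq by (simp add: numeral_2_eq_2)
  qed
qed

lemma mod_swap_false: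
  fixes i j L :: nat
  assumes "i < L" "j < L" "3 \<le> L" "i = (j + 1) mod L" "j = (i + 1) mod L"
  shows False
proof (cases "j + 1 < L")
  case True
  then have i: "i = j + 1" using assms(4) by simp
  show False
  proof (cases "i + 1 < L")
    case True
    then have "(i + 1) mod L = i + 1" by simp
    then have "j = i + 1" using assms(5) by linarith
    then show False using i by linarith
  next
    case False
    then have iL: "i + 1 = L" using assms(1) by simp
    then have "(i + 1) mod L = 0" by simp
    then have "j = 0" using assms(5) by linarith
    then show False using i \<open>i + 1 = L\<close> assms(3) by simp
  qed
next
  case False
  then have "j + 1 = L" using assms(2) by simp
  then have "i = 0" using assms(4) by simp
  then have "j = 1 mod L" using assms(5) by simp
  then have "j = 1" using assms(3) by simp
  then show False using \<open>j + 1 = L\<close> assms(3) by simp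
qed

lemma cycle_card:
  assumes "is_cycle_on E X"
  shows "card X \<le> card (induced_edges E X)"
proof -
  obtain vs where v: "length vs \<ge> 3" "distinct vs" "set vs = X"
     "induced_edges E X = {{vs ! i, vs ! ((i + 1) mod length vs)} | i. i < length vs}"
    using assms unfolding is_cycle_on_def by blast
  let ?L = "length vs"
  let ?f = "\<lambda>i. {vs ! i, vs ! ((i + 1) mod ?L)}"
  have eq: "induced_edges E X = ?f ` {..<?L}" unfolding v(4) by blast
  have "inj_on ?f {..<?L}"
  proof (rule inj_onI)
    fix i j assume ij: "i \<in> {..<?L}" "j \<in> {..<?L}" "?f i = ?f j"
    have il: "i < ?L" and jl: "j < ?L" using ij(1,2) by auto
    have L0: "0 < ?L" using v(1) by linarith
    have mi: "(i + 1) mod ?L < ?L" and mj: "(j + 1) mod ?L < ?L" using L0 by simp_all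
    from ij(3) have "(vs ! i = vs ! j \<and> vs ! ((i + 1) mod ?L) = vs ! ((j + 1) mod ?L)) \<or>
        (vs ! i = vs ! ((j + 1) mod ?L) \<and> vs ! ((i + 1) mod ?L) = vs ! j)"
      by (simp only: doubleton_eq_iff)
    then show "i = j"
    proof
      assume "vs ! i = vs ! j \<and> vs ! ((i + 1) mod ?L) = vs ! ((j + 1) mod ?L)"
      then have a1: "vs ! i = vs ! j" by (rule conjunct1)
      show "i = j" by (rule nth_eq_iff_index_eq[OF v(2) il jl, THEN iffD1, OF a1])
    next
      assume a: "vs ! i = vs ! ((j + 1) mod ?L) \<and> vs ! ((i + 1) mod ?L) = vs ! j"
      then have a1: "vs ! i = vs ! ((j + 1) mod ?L)" and a2: "vs ! ((i + 1) mod ?L) = vs ! j"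
        by (rule conjunct1, rule conjunct2)
      have e1: "i = (j + 1) mod ?L" by (rule nth_eq_iff_index_eq[OF v(2) il mj, THEN iffD1, OF a1])
      have e2: "(i + 1) mod ?L = j" by (rule nth_eq_iff_index_eq[OF v(2) mi jl, THEN iffD1, OF a2])
      have False by (rule mod_swap_false[OF il jl v(1) e1 e2[symmetric]])
      then show "i = j" by (rule FalseE)
    qed
  qed
  then have "card (induced_edges E X) = ?L" using eq card_image by fastforce
  moreover have "card X = ?L" using v(2,3) distinct_card by blast
  ultimately show ?thesis by simp
qed

lemma path_card:
  assumes "is_path_on E X"
  shows "card X \<le> card (induced_edges E X) + 1"
proof -
  obtain vs where v: "vs \<noteq> []" "distinct vs" "set vs = X"
     "induced_edges E X = {{vs ! i, vs ! (i + 1)} | i. i + 1 < length vs}"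
    using assms unfolding is_path_on_def by blast
  let ?L = "length vs"
  let ?f = "\<lambda>i. {vs ! i, vs ! (i + 1)}"
  have eq: "induced_edges E X = ?f ` {..<?L - 1}" using v(4) by auto
  have "inj_on ?f {..<?L - 1}"
  proof (rule inj_onI)
    fix i j assume ij: "i \<in> {..<?L - 1}" "j \<in> {..<?L - 1}" "?f i = ?f j"
    from ij(3) have "(vs ! i = vs ! j \<and> vs ! (i + 1) = vs ! (j + 1)) \<or>
        (vs ! i = vs ! (j + 1) \<and> vs ! (i + 1) = vs ! j)"
      by (simp add: doubleton_eq_iff)
    then show "i = j"
    proof
      assume h: "vs ! i = vs ! j \<and> vs ! (i + 1) = vs ! (j + 1)"
      have "i < ?L" "j < ?L" using ij(1,2) by auto
      then show "i = j" using v(2) h nth_eq_iff_index_eq by blast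
    next
      assume a: "vs ! i = vs ! (j + 1) \<and> vs ! (i + 1) = vs ! j"
      have "i + 1 < ?L" "j + 1 < ?L" using ij(1,2) by auto
      then have "i < ?L" "j < ?L" by auto
      have a1: "vs ! i = vs ! (j + 1)" and a2: "vs ! (i + 1) = vs ! j" using a by simp_all
      have "i = j + 1" by (rule nth_eq_iff_index_eq[OF v(2) \<open>i < ?L\<close> \<open>j + 1 < ?L\<close>, THEN iffD1, OF a1])
      moreover have "i + 1 = j" by (rule nth_eq_iff_index_eq[OF v(2) \<open>i + 1 < ?L\<close> \<open>j < ?L\<close>, THEN iffD1, OF a2])
      ultimately show "i = j" by simp
    qed
  qed
  then have "card (induced_edges E X) = ?L - 1" using eq card_image by fastforce
  moreover have "card X = ?L" using v(2,3) distinct_card by blast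
  ultimately show ?thesis by simp
qed

lemma cpm_card:
  assumes ne: "{} \<notin> E" and fin: "finite U" and c: "cpm E U m"
  shows "card U \<le> card (induced_edges E U) + m"
proof -
  obtain Cs Ps where 1: "finite Cs" "finite Ps" "Cs \<inter> Ps = {}" "card Ps \<le> m"
     "\<Union>(Cs \<union> Ps) = U"
     "(\<forall>X\<in>Cs \<union> Ps. \<forall>Y\<in>Cs \<union> Ps. X \<noteq> Y \<longrightarrow> X \<inter> Y = {})"
     "(\<forall>e\<in>induced_edges E U. \<exists>X\<in>Cs \<union> Ps. e \<subseteq> X)"
     "(\<forall>X\<in>Cs. is_cycle_on E X)" "(\<forall>X\<in>Ps. is_path_on E X)"
    using c unfolding cpm_def by blast
  let ?F = "Cs \<union> Ps"
  have finF: "finite ?F" using 1 by simp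
  have finX: "finite X" if "X \<in> ?F" for X using that 1(5) fin by (meson Union_upper finite_subset)
  have pw: "pairwise disjnt ?F" using 1(6) unfolding pairwise_def disjnt_def by blast
  have "card (\<Union>?F) = sum card ?F" by (rule card_Union_disjoint[OF pw finX])
  then have cU: "card U = (\<Sum>X\<in>?F. card X)" using 1(5) by simp
  have ieq: "induced_edges E U = (\<Union>X\<in>?F. induced_edges E X)"
    using 1(5,7) unfolding induced_edges_def by blast
  have finI: "finite (induced_edges E X)" if "X \<in> ?F" for X
  proof -
    have "induced_edges E X \<subseteq> Pow X" unfolding induced_edges_def by blast
    then show ?thesis using finX[OF that] by (meson finite_Pow_iff finite_subset)
  qed
  have dI: "\<forall>X\<in>?F. \<forall>Y\<in>?F. X \<noteq> Y \<longrightarrow> induced_edges E X \<inter> induced_edges E Y = {}"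
  proof (intro ballI impI)
    fix X Y assume xy: "X \<in> ?F" "Y \<in> ?F" "X \<noteq> Y"
    then have d: "X \<inter> Y = {}" using 1(6) by blast
    show "induced_edges E X \<inter> induced_edges E Y = {}"
    proof (rule ccontr)
      assume "induced_edges E X \<inter> induced_edges E Y \<noteq> {}"
      then obtain e where "e \<in> E" "e \<subseteq> X" "e \<subseteq> Y" unfolding induced_edges_def by blast
      then have "e = {}" using d by blast
      then show False using \<open>e \<in> E\<close> ne by simp
    qed
  qed
  have cI: "card (induced_edges E U) = (\<Sum>X\<in>?F. card (induced_edges E X))"
    unfolding ieq by (rule card_UN_disjoint[OF finF _ dI]) (use finI in blast)
  have "(\<Sum>X\<in>?F. card X) = (\<Sum>X\<in>Cs. card X) + (\<Sum>X\<in>Ps. card X)"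
    using 1 by (simp add: sum.union_disjoint)
  also have "\<dots> \<le> (\<Sum>X\<in>Cs. card (induced_edges E X)) + (\<Sum>X\<in>Ps. card (induced_edges E X) + 1)"
  proof (rule add_mono)
    show "(\<Sum>X\<in>Cs. card X) \<le> (\<Sum>X\<in>Cs. card (induced_edges E X))"
      by (rule sum_mono) (use 1(8) cycle_card in blast)
    show "(\<Sum>X\<in>Ps. card X) \<le> (\<Sum>X\<in>Ps. card (induced_edges E X) + 1)"
      by (rule sum_mono) (use 1(9) path_card in blast)
  qed
  also have "\<dots> = (\<Sum>X\<in>?F. card (induced_edges E X)) + card Ps"
  proof -
    have "(\<Sum>X\<in>Ps. card (induced_edges E X) + 1) = (\<Sum>X\<in>Ps. card (induced_edges E X)) + card Ps"
      by (simp only: sum.distrib card_eq_sum)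
    then show ?thesis using 1 by (simp add: sum.union_disjoint)
  qed
  finally show ?thesis using cU cI 1(4) by linarith
qed

lemma tf_facts:
  assumes "two_factor V E"
  shows "finite V" "finite E" "{} \<notin> E"
    "\<And>e x. e \<in> E \<Longrightarrow> x \<in> e \<Longrightarrow> \<exists>y. e = {x, y} \<and> x \<noteq> y \<and> y \<in> V \<and> x \<in> V"
    "\<And>v. v \<in> V \<Longrightarrow> card {e \<in> E. v \<in> e} = 2"
proof -
  have s0: "simple_graph V E" using assms unfolding two_factor_def by (rule conjunct1)
  have s: "finite V" "\<forall>e\<in>E. \<exists>u v. u \<noteq> v \<and> e = {u, v} \<and> u \<in> V \<and> v \<in> V"
    using s0 unfolding simple_graph_def by (rule conjunct1, rule conjunct2)
  show "finite V" by (rule s(1))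
  have "E \<subseteq> Pow V"
  proof
    fix e assume "e \<in> E"
    then obtain u v where "u \<noteq> v \<and> e = {u, v} \<and> u \<in> V \<and> v \<in> V"
      using bspec[OF s(2)] by iprover
    then show "e \<in> Pow V" by simp
  qed
  moreover have "finite (Pow V)" using s(1) by simp
  ultimately show "finite E" by (rule finite_subset)
  show "{} \<notin> E"
  proof
    assume h: "{} \<in> E"
    show False using bspec[OF s(2) h] by simp
  qed
  show "\<exists>y. e = {x, y} \<and> x \<noteq> y \<and> y \<in> V \<and> x \<in> V" if ee: "e \<in> E" "x \<in> e" for e x
  proof -
    obtain u v where "u \<noteq> v \<and> e = {u, v} \<and> u \<in> V \<and> v \<in> V"
      using bspec[OF s(2) ee(1)] by iprover
    then have "u \<noteq> v" "e = {u, v}" "u \<in> V" "v \<in> V" by simp_all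
    show ?thesis
    proof (cases "x = u")
      case True
      show ?thesis
        by (rule exI[of _ v]) (use True \<open>u \<noteq> v\<close> \<open>e = {u, v}\<close> \<open>u \<in> V\<close> \<open>v \<in> V\<close> in simp)
    next
      case False
      then have "x = v" using ee(2) \<open>e = {u, v}\<close> by simp
      moreover have "e = {v, u}" using \<open>e = {u, v}\<close> by (simp add: insert_commute)
      ultimately show ?thesis
        by (intro exI[of _ u]) (use \<open>u \<noteq> v\<close> \<open>u \<in> V\<close> \<open>v \<in> V\<close> in simp)
    qed
  qed
  show "card {e \<in> E. v \<in> e} = 2" if "v \<in> V" for v
  proof -
    have "\<forall>v\<in>V. degree E v = 2" using assms unfolding two_factor_def by (rule conjunct2)
    then show ?thesis using that unfolding degree_def by (rule bspec)
  qed
qed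

lemma two_sub:
  assumes "finite S" "card S = 2" "a \<in> S" "b \<in> S" "a \<noteq> b"
  shows "S = {a, b}"
proof -
  have "{a, b} \<subseteq> S" using assms by blast
  moreover have "card {a, b} = card S" using assms by simp
  ultimately show ?thesis using card_subset_eq[OF assms(1)] by blast
qed

lemma three_le:
  assumes "finite S" "a \<in> S" "b \<in> S" "c \<in> S" "a \<noteq> b" "a \<noteq> c" "b \<noteq> c"
  shows "3 \<le> card S"
proof -
  have "{a, b, c} \<subseteq> S" using assms by blast
  moreover have "card {a, b, c} = 3" using assms by simp
  ultimately have "card {a, b, c} \<le> card S" using card_mono[OF assms(1)] by blast
  then show ?thesis using \<open>card {a, b, c} = 3\<close> by simp
qed

definition pwalk :: "'a set set \<Rightarrow> 'a set \<Rightarrow> 'a list \<Rightarrow> bool" where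
  "pwalk E V p \<longleftrightarrow> p \<noteq> [] \<and> distinct p \<and> set p \<subseteq> V \<and>
     (\<forall>i. i + 1 < length p \<longrightarrow> {p ! i, p ! (i + 1)} \<in> E)"

lemma find_cycle:
  assumes tf: "two_factor V E" and vne: "V \<noteq> {}"
  shows "\<exists>c. good_cycle E c \<and> set c \<subseteq> V"
proof -
  note F = tf_facts[OF tf]
  obtain v0 where v0: "v0 \<in> V" using vne by blast
  have P0: "pwalk E V [v0]" using v0 unfolding pwalk_def by simp
  have bnd: "\<forall>q. pwalk E V q \<longrightarrow> length q < card V + 1"
  proof (intro allI impI)
    fix q assume "pwalk E V q"
    then have "distinct q" "set q \<subseteq> V" unfolding pwalk_def by auto
    then have "card (set q) \<le> card V" "card (set q) = length q"
      using card_mono[OF F(1)] distinct_card by blast+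
    then have "length q \<le> card V" by simp
    then show "length q < card V + 1" by simp
  qed
  obtain p where Pp: "pwalk E V p" and mx: "\<forall>q. pwalk E V q \<longrightarrow> length q \<le> length p"
    using Lattices_Big.ex_has_greatest_nat[of "pwalk E V" "[v0]" length "card V + 1"] P0 bnd by blast
  have pne: "p \<noteq> []" and dp: "distinct p" and pV: "set p \<subseteq> V"
    and pe: "\<And>i. i + 1 < length p \<Longrightarrow> {p ! i, p ! (i + 1)} \<in> E"
    using Pp unfolding pwalk_def by auto
  define L where "L = length p"
  define x where "x = p ! (L - 1)"
  have L1: "1 \<le> L" using pne unfolding L_def by (cases p) auto
  have xp: "x \<in> set p" unfolding x_def L_def using L1 L_def by simp
  have xV: "x \<in> V" using xp pV by blast
  have nbr: "\<exists>y. e = {x, y} \<and> x \<noteq> y \<and> y \<in> set p" if e: "e \<in> E" "x \<in> e" for e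
  proof -
    obtain y where y: "e = {x, y}" "x \<noteq> y" "y \<in> V" using F(4)[OF e] by blast
    have "y \<in> set p"
    proof (rule ccontr)
      assume yn: "y \<notin> set p"
      let ?q = "p @ [y]"
      have "pwalk E V ?q" unfolding pwalk_def
      proof (intro conjI allI impI)
        show "?q \<noteq> []" by simp
        show "distinct ?q" using dp yn by simp
        show "set ?q \<subseteq> V" using pV y(3) by simp
        fix i assume i: "i + 1 < length ?q"
        show "{?q ! i, ?q ! (i + 1)} \<in> E"
        proof (cases "i + 1 < L")
          case True
          then show ?thesis using pe[of i] unfolding L_def by (simp add: nth_append)
        next
          case False
          then have "i = L - 1" using i unfolding L_def by simp
          then have i1: "i + 1 = length p" and i2: "i < length p" using L1 unfolding L_def by auto
          have "?q ! i = x" using i2 \<open>i = L - 1\<close> unfolding x_def by (simp add: nth_append)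
          moreover have "?q ! (i + 1) = y" by (simp only: i1 nth_append_length)
          ultimately show ?thesis using y(1) e(1) by simp
        qed
      qed
      then have "length ?q \<le> length p" using mx by blast
      then show False by simp
    qed
    then show ?thesis using y by blast
  qed
  have "\<exists>a b. {e \<in> E. x \<in> e} = {a, b} \<and> a \<noteq> b"
    using F(5)[OF xV] by (simp only: card_2_iff)
  then obtain e1 e2 where e12: "{e \<in> E. x \<in> e} = {e1, e2}" "e1 \<noteq> e2" by blast
  have "e1 \<in> E" "x \<in> e1" "e2 \<in> E" "x \<in> e2" using e12(1) by blast+
  obtain y1 where y1: "e1 = {x, y1}" "x \<noteq> y1" "y1 \<in> set p"
    using nbr[OF \<open>e1 \<in> E\<close> \<open>x \<in> e1\<close>] by blast
  obtain y2 where y2: "e2 = {x, y2}" "x \<noteq> y2" "y2 \<in> set p"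
    using nbr[OF \<open>e2 \<in> E\<close> \<open>x \<in> e2\<close>] by blast
  have y12: "y1 \<noteq> y2" using y1 y2 e12(2) by blast
  have L2: "2 \<le> L"
  proof (rule ccontr)
    assume "\<not> 2 \<le> L"
    then have "L = 1" using L1 by simp
    then obtain a where "p = [a]" unfolding L_def by (cases p) auto
    then have "set p = {x}" unfolding x_def L_def by simp
    then show False using y1(2,3) by simp
  qed
  obtain y e where ye: "e \<in> E" "e = {x, y}" "x \<noteq> y" "y \<in> set p" "y \<noteq> p ! (L - 2)"
  proof (cases "y1 = p ! (L - 2)")
    case True
    then show ?thesis using that[of e2 y2] y2 y12 \<open>e2 \<in> E\<close> by blast
  next
    case False
    then show ?thesis using that[of e1 y1] y1 \<open>e1 \<in> E\<close> by blast
  qed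
  obtain j where j: "j < L" "p ! j = y" using ye(4) unfolding L_def by (auto simp: in_set_conv_nth)
  have "j \<noteq> L - 1" using j ye(3) unfolding x_def by blast
  moreover have "j \<noteq> L - 2" using j ye(5) by blast
  ultimately have jL: "j + 2 < L" using j(1) L2 by linarith
  have idx: "p ! a = p ! b \<longleftrightarrow> a = b" if "a < L" "b < L" for a b
    using nth_eq_iff_index_eq[OF dp] that unfolding L_def by blast
  have j0: "j = 0"
  proof (rule ccontr)
    assume "j \<noteq> 0"
    let ?w = "p ! j"
    let ?S = "{e \<in> E. ?w \<in> e}"
    have E1: "{p ! (j - 1), ?w} \<in> E" using pe[of "j - 1"] \<open>j \<noteq> 0\<close> jL unfolding L_def by simp
    have E2: "{?w, p ! (j + 1)} \<in> E" using pe[of j] jL unfolding L_def by simp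
    have d1: "p ! (j - 1) \<noteq> ?w" "p ! (j - 1) \<noteq> p ! (j + 1)" "p ! (j - 1) \<noteq> x"
      "?w \<noteq> p ! (j + 1)" "?w \<noteq> x" "p ! (j + 1) \<noteq> x"
      unfolding x_def
      using idx[of "j - 1" j] idx[of "j - 1" "j + 1"] idx[of "j - 1" "L - 1"]
        idx[of j "j + 1"] idx[of j "L - 1"] idx[of "j + 1" "L - 1"] jL \<open>j \<noteq> 0\<close>
      by simp_all
    have ew: "e = {x, ?w}" using ye(2) j(2) by simp
    have "3 \<le> card ?S"
    proof (rule three_le[of ?S "{p ! (j - 1), ?w}" "{?w, p ! (j + 1)}" e])
      show "finite ?S" using F(2) by simp
      show "{p ! (j - 1), ?w} \<in> ?S" using E1 by simp
      show "{?w, p ! (j + 1)} \<in> ?S" using E2 by simp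
      show "e \<in> ?S" using ye(1) ew by simp
      show "{p ! (j - 1), ?w} \<noteq> {?w, p ! (j + 1)}" using d1 by (simp add: doubleton_eq_iff)
      show "{p ! (j - 1), ?w} \<noteq> e" unfolding ew using d1 by (simp add: doubleton_eq_iff)
      show "{?w, p ! (j + 1)} \<noteq> e" unfolding ew using d1 by (simp add: doubleton_eq_iff)
    qed
    moreover have "?w \<in> V" using pV j(1) unfolding L_def by auto
    moreover have "card ?S = 2" using F(5) calculation(2) by blast
    ultimately show False by linarith
  qed
  have L3: "3 \<le> L" using jL j0 by simp
  have close: "{p ! (L - 1), p ! 0} \<in> E" using ye(1,2) j j0 unfolding x_def by (simp add: insert_commute)
  have cycE: "{p ! i, p ! ((i + 1) mod L)} \<in> E" if "i < L" for i
  proof (cases "i + 1 < L")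
    case True
    then show ?thesis using pe[of i] unfolding L_def by simp
  next
    case False
    then have "i = L - 1" using that by simp
    then show ?thesis using close L1 by simp
  qed
  have "good_cycle E p" unfolding good_cycle_def
  proof (intro conjI)
    show "3 \<le> length p" using L3 unfolding L_def .
    show "distinct p" by (rule dp)
    show "{e \<in> E. e \<inter> set p \<noteq> {}} = cyc_edges p"
    proof
      show "cyc_edges p \<subseteq> {e \<in> E. e \<inter> set p \<noteq> {}}"
      proof
        fix e assume "e \<in> cyc_edges p"
        then obtain i where i: "i < L" "e = {p ! i, p ! ((i + 1) mod L)}"
          unfolding cyc_edges_def L_def by blast
        then show "e \<in> {e \<in> E. e \<inter> set p \<noteq> {}}" using cycE[OF i(1)] unfolding L_def by auto
      qed
      show "{e \<in> E. e \<inter> set p \<noteq> {}} \<subseteq> cyc_edges p"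
      proof
        fix e assume "e \<in> {e \<in> E. e \<inter> set p \<noteq> {}}"
        then obtain z where e: "e \<in> E" "z \<in> e" "z \<in> set p" by blast
        then obtain i where i: "i < L" "p ! i = z" unfolding L_def by (auto simp: in_set_conv_nth)
        define i' where "i' = (if i = 0 then L - 1 else i - 1)"
        define i'' where "i'' = (i + 1) mod L"
        have i'L: "i' < L" using i L1 unfolding i'_def by auto
        have i''L: "i'' < L" using L1 unfolding i''_def by simp
        have i'i: "(i' + 1) mod L = i" using i L1 unfolding i'_def by auto
        have ne: "i' \<noteq> i''"
        proof (cases "i = 0")
          case True
          then show ?thesis using L3 unfolding i'_def i''_def by simp
        next
          case False
          show ?thesis
          proof (cases "i + 1 < L")
            case True
            then show ?thesis using False unfolding i'_def i''_def by simp
          next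
            case F2: False
            then have "i + 1 = L" using i by simp
            then show ?thesis using False L3 unfolding i'_def i''_def by simp
          qed
        qed
        let ?A = "{p ! i', p ! i}"
        let ?B = "{p ! i, p ! i''}"
        have AE: "?A \<in> E" using cycE[OF i'L] i'i by simp
        have BE: "?B \<in> E" using cycE[OF i(1)] unfolding i''_def by simp
        have AB: "?A \<noteq> ?B"
        proof
          assume "?A = ?B"
          then have "p ! i' = p ! i''" by (metis doubleton_eq_iff)
          then show False using idx[OF i'L i''L] ne by simp
        qed
        have "{e \<in> E. z \<in> e} = {?A, ?B}"
        proof (rule two_sub)
          show "finite {e \<in> E. z \<in> e}" using F(2) by simp
          show "card {e \<in> E. z \<in> e} = 2" using F(5) pV e(3) by blast
          show "?A \<in> {e \<in> E. z \<in> e}" using AE i(2) by simp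
          show "?B \<in> {e \<in> E. z \<in> e}" using BE i(2) by simp
        qed (rule AB)
        then have "e = ?A \<or> e = ?B" using e by blast
        moreover have "?A \<in> cyc_edges p"
        proof -
          have "?A = {p ! i', p ! ((i' + 1) mod length p)}" using i'i unfolding L_def by simp
          then show ?thesis unfolding cyc_edges_def using i'L unfolding L_def by blast
        qed
        moreover have "?B \<in> cyc_edges p" unfolding cyc_edges_def L_def[symmetric] i''_def
          using i(1) by blast
        ultimately show "e \<in> cyc_edges p" by blast
      qed
    qed
  qed
  then show ?thesis using pV by blast
qed

lemma decomp:
  "two_factor V E \<Longrightarrow> \<exists>cs. cdec E cs \<and> set (concat cs) = V"
proof (induction "card V" arbitrary: V E rule: less_induct)
  case less
  note F = tf_facts[OF less.prems]
  show ?case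
  proof (cases "V = {}")
    case True
    then show ?thesis unfolding cdec_def by (intro exI[of _ "[]"]) simp
  next
    case False
    obtain c where c: "good_cycle E c" "set c \<subseteq> V" using find_cycle[OF less.prems False] by blast
    define V' where "V' = V - set c"
    define E' where "E' = {e \<in> E. e \<inter> set c = {}}"
    have "3 \<le> length c" using c(1) unfolding good_cycle_def by (rule conjunct1)
    then have cne: "set c \<noteq> {}" by (cases c) simp_all
    obtain z where z: "z \<in> set c" using cne by (meson equals0I)
    have "V' \<subset> V" unfolding V'_def using z c(2) by blast
    then have lt: "card V' < card V" by (rule psubset_card_mono[OF F(1)])
    have same: "{e \<in> E. v \<in> e} = {e \<in> E'. v \<in> e}" if "v \<in> V'" for v
    proof
      show "{e \<in> E. v \<in> e} \<subseteq> {e \<in> E'. v \<in> e}"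
      proof
        fix e assume e: "e \<in> {e \<in> E. v \<in> e}"
        have "e \<inter> set c = {}"
        proof (rule ccontr)
          assume "e \<inter> set c \<noteq> {}"
          then obtain z where "z \<in> e" "z \<in> set c" by blast
          then have "e \<in> cyc_edges c" using good_cycle_touch[OF c(1)] e by blast
          then have "e \<subseteq> set c" by (rule cyc_edges_sub)
          then show False using e that unfolding V'_def by blast
        qed
        then show "e \<in> {e \<in> E'. v \<in> e}" using e unfolding E'_def by blast
      qed
      show "{e \<in> E'. v \<in> e} \<subseteq> {e \<in> E. v \<in> e}" unfolding E'_def by blast
    qed
    have tf': "two_factor V' E'" unfolding two_factor_def simple_graph_def
    proof (intro conjI ballI)
      show "finite V'" using F(1) unfolding V'_def by simp
      fix e assume e: "e \<in> E'"
      then have "e \<in> E" "e \<inter> set c = {}" unfolding E'_def by auto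
      have "e \<noteq> {}" by (rule notI) (use \<open>e \<in> E\<close> F(3) in simp)
      then obtain x where "x \<in> e" by (meson equals0I)
      then obtain y where y: "e = {x, y} \<and> x \<noteq> y \<and> y \<in> V \<and> x \<in> V"
        using F(4)[OF \<open>e \<in> E\<close>] by iprover
      then have y: "e = {x, y}" "x \<noteq> y" "y \<in> V" "x \<in> V" by simp_all
      have "x \<in> e" "y \<in> e" using y(1) by simp_all
      then have "x \<notin> set c" "y \<notin> set c" using \<open>e \<inter> set c = {}\<close> by blast+
      then show "\<exists>u v. u \<noteq> v \<and> e = {u, v} \<and> u \<in> V' \<and> v \<in> V'"
        by (intro exI[of _ x] exI[of _ y]) (use y in \<open>simp add: V'_def\<close>)
    next
      fix v assume v: "v \<in> V'"
      then have "v \<in> V" unfolding V'_def by simp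
      then have "card {e \<in> E. v \<in> e} = 2" by (rule F(5))
      then show "degree E' v = 2" unfolding degree_def same[OF v] .
    qed
    obtain cs where cs: "cdec E' cs" "set (concat cs) = V'" using less.hyps[OF lt tf'] by blast
    have gE: "good_cycle E c'" if "good_cycle E' c'" "set c' \<subseteq> V'" for c'
    proof -
      have "{e \<in> E. e \<inter> set c' \<noteq> {}} = {e \<in> E'. e \<inter> set c' \<noteq> {}}"
      proof
        show "{e \<in> E. e \<inter> set c' \<noteq> {}} \<subseteq> {e \<in> E'. e \<inter> set c' \<noteq> {}}"
        proof
          fix e assume e: "e \<in> {e \<in> E. e \<inter> set c' \<noteq> {}}"
          then obtain z where z: "z \<in> e" "z \<in> set c'" by blast
          then have zV: "z \<in> V'" using that(2) by blast
          have "e \<in> {e \<in> E. z \<in> e}" using e z by blast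
          then have "e \<in> {e \<in> E'. z \<in> e}" unfolding same[OF zV] .
          then show "e \<in> {e \<in> E'. e \<inter> set c' \<noteq> {}}" using e by blast
        qed
        show "{e \<in> E'. e \<inter> set c' \<noteq> {}} \<subseteq> {e \<in> E. e \<inter> set c' \<noteq> {}}" unfolding E'_def by blast
      qed
      then show ?thesis using that(1) unfolding good_cycle_def by (simp only:)
    qed
    have "cdec E (c # cs)" unfolding cdec_def
    proof (intro conjI ballI)
      fix c' assume "c' \<in> set (c # cs)"
      then have "c' = c \<or> c' \<in> set cs" by simp
      then show "good_cycle E c'"
      proof
        assume "c' = c" then show ?thesis using c(1) by simp
      next
        assume h: "c' \<in> set cs"
        then have "good_cycle E' c'" using cs(1) unfolding cdec_def by blast
        moreover have "set c' \<subseteq> V'" using h cs(2) by auto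
        ultimately show ?thesis by (rule gE)
      qed
    next
      have "distinct c" using c(1) unfolding good_cycle_def by simp
      moreover have "distinct (concat cs)" using cs(1) unfolding cdec_def by simp
      moreover have "set c \<inter> set (concat cs) = {}" unfolding cs(2) V'_def by blast
      ultimately show "distinct (concat (c # cs))" by simp
    qed
    moreover have "set (concat (c # cs)) = V"
    proof -
      have "set (concat (c # cs)) = set c \<union> set (concat cs)" by simp
      also have "\<dots> = V" unfolding cs(2) V'_def using c(2) by blast
      finally show ?thesis .
    qed
    ultimately show ?thesis by blast
  qed
qed

lemma seg_mem:
  assumes "p < length vs" "s \<le> p" "p < s + k"
  shows "vs ! p \<in> set (take k (drop s vs))"
proof -
  have "take k (drop s vs) ! (p - s) = vs ! p" using assms by simp
  moreover have "p - s < length vs - s" "p - s < k" using assms by linarith+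
  then have "p - s < length (take k (drop s vs))" by simp
  ultimately show ?thesis by (metis nth_mem)
qed

lemma mem_seg:
  assumes "x \<in> set (take k (drop s vs))"
  shows "\<exists>p. s \<le> p \<and> p < s + k \<and> p < length vs \<and> x = vs ! p"
proof -
  obtain t where t: "t < length (take k (drop s vs))" "take k (drop s vs) ! t = x"
    using assms by (auto simp: in_set_conv_nth)
  then have "x = vs ! (s + t)" "t < k" "s + t < length vs" by auto
  then show ?thesis by (intro exI[of _ "s + t"]) simp
qed

lemma div_blk:
  fixes p b k :: nat
  assumes "b * k \<le> p" "p < b * k + k"
  shows "p div k = b"
  by (rule div_nat_eqI) (use assms in \<open>simp_all add: mult.commute\<close>)

theorem lemma3p7:
  fixes V :: "'a set" and E :: "'a set set" and k n :: nat
  assumes "k > 0" and "two_factor V E" and "card V = n"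
  shows "\<exists>U :: nat \<Rightarrow> 'a set.
           (\<Union>i\<in>{0..n div k}. U i) = V \<and>
           (\<forall>i\<in>{0..n div k}. \<forall>j\<in>{0..n div k}. i \<noteq> j \<longrightarrow> U i \<inter> U j = {}) \<and>
           (\<forall>i\<in>{1..n div k}. card (U i) = k) \<and>
           card (U 0) < k \<and>
           (\<forall>i\<in>{0..n div k}. cycles_and_two_paths E (U i)) \<and>
           (\<forall>i\<in>{1..n div k}. card (induced_edges E (U i)) \<ge> k - 2)"
proof -
  note F = tf_facts[OF assms(2)]
  obtain cs where cs: "cdec E cs" "set (concat cs) = V" using decomp[OF assms(2)] by blast
  define vs where "vs = concat cs"
  have dvs: "distinct vs" using cs(1) unfolding cdec_def vs_def by simp
  have svs: "set vs = V" using cs(2) unfolding vs_def .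
  have lvs: "length vs = n" using distinct_card[OF dvs] svs assms(3) by simp
  define q where "q = n div k"
  define b where "b i = (if i = 0 then q else i - 1)" for i :: nat
  define U where "U i = set (take k (drop (b i * k) vs))" for i
  have qk: "q * k \<le> n" unfolding q_def by simp
  have U_sub: "U i \<subseteq> V" for i unfolding U_def svs[symmetric]
    by (meson set_drop_subset set_take_subset subset_trans)
  have cover: "(\<Union>i\<in>{0..q}. U i) = V"
  proof
    show "(\<Union>i\<in>{0..q}. U i) \<subseteq> V" using U_sub by blast
    show "V \<subseteq> (\<Union>i\<in>{0..q}. U i)"
    proof
      fix x assume "x \<in> V"
      then obtain p where p: "p < n" "vs ! p = x" using svs lvs by (auto simp: in_set_conv_nth)
      define c where "c = p div k"
      have c1: "c * k \<le> p" unfolding c_def by simp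
      have c2: "p < c * k + k"
      proof -
        have "p = c * k + p mod k" unfolding c_def by simp
        moreover have "p mod k < k" using assms(1) by simp
        ultimately show ?thesis by linarith
      qed
      have cq: "c \<le> q" unfolding c_def q_def using p(1) by (simp add: div_le_mono)
      show "x \<in> (\<Union>i\<in>{0..q}. U i)"
      proof (cases "c < q")
        case True
        have "b (c + 1) = c" unfolding b_def by simp
        then have "x \<in> U (c + 1)" unfolding U_def using seg_mem[of p vs "c * k" k] p c1 c2 lvs by simp
        moreover have "c + 1 \<in> {0..q}" using True by simp
        ultimately show ?thesis by blast
      next
        case False
        then have "c = q" using cq by simp
        then have "x \<in> U 0" unfolding U_def b_def using seg_mem[of p vs "c * k" k] p c1 c2 lvs by simp
        then show ?thesis by force
      qed
    qed
  qed
  have bq: "b i \<le> q" "i \<noteq> 0 \<Longrightarrow> b i < q" if "i \<in> {0..q}" for i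
    using that unfolding b_def by auto
  have binj: "b i = b j \<Longrightarrow> i = j" if "i \<in> {0..q}" "j \<in> {0..q}" for i j
    using that unfolding b_def by (auto split: if_splits)
  have disj: "U i \<inter> U j = {}" if ij: "i \<in> {0..q}" "j \<in> {0..q}" "i \<noteq> j" for i j
  proof (rule ccontr)
    assume "U i \<inter> U j \<noteq> {}"
    then have "\<exists>x. x \<in> U i \<inter> U j" by (rule ex_in_conv[THEN iffD2])
    then obtain x where "x \<in> U i \<inter> U j" by (rule exE)
    then have x: "x \<in> U i" "x \<in> U j" by simp_all
    have xi: "x \<in> set (take k (drop (b i * k) vs))" using x(1) unfolding U_def .
    have xj: "x \<in> set (take k (drop (b j * k) vs))" using x(2) unfolding U_def .
    from mem_seg[OF xi] obtain p1 where "b i * k \<le> p1 \<and> p1 < b i * k + k \<and> p1 < length vs \<and> x = vs ! p1"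
      by (rule exE)
    then have p1: "b i * k \<le> p1" "p1 < b i * k + k" "p1 < length vs" "x = vs ! p1" by simp_all
    from mem_seg[OF xj] obtain p2 where "b j * k \<le> p2 \<and> p2 < b j * k + k \<and> p2 < length vs \<and> x = vs ! p2"
      by (rule exE)
    then have p2: "b j * k \<le> p2" "p2 < b j * k + k" "p2 < length vs" "x = vs ! p2" by simp_all
    have "vs ! p1 = vs ! p2" using p1(4) p2(4) by simp
    then have "p1 = p2" using nth_eq_iff_index_eq[OF dvs p1(3) p2(3)] by simp
    then have "b i = b j" using div_blk[OF p1(1,2)] div_blk[OF p2(1,2)] by simp
    then show False using binj[OF ij(1,2)] ij(3) by simp
  qed
  have lenU: "length (take k (drop (b i * k) vs)) = min k (n - b i * k)" for i using lvs by simp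
  have distU: "distinct (take k (drop (b i * k) vs))" for i using dvs by simp
  have cardU: "card (U i) = min k (n - b i * k)" for i
    unfolding U_def using distinct_card[OF distU] lenU by simp
  have card1: "card (U i) = k" if "i \<in> {1..q}" for i
  proof -
    have "b i = i - 1" using that unfolding b_def by simp
    then have "b i + 1 \<le> q" using that by simp
    then have "(b i + 1) * k \<le> q * k" by (rule mult_le_mono1)
    then have "b i * k + k \<le> q * k" by (simp add: algebra_simps)
    then show ?thesis using cardU qk by simp
  qed
  have card0: "card (U 0) < k"
  proof -
    have "n - q * k = n mod k" unfolding q_def by (simp add: minus_div_mult_eq_mod)
    then have "n - q * k < k" using assms(1) by simp
    then show ?thesis using cardU[of 0] unfolding b_def by simp
  qed
  have cp: "cycles_and_two_paths E (U i)" for i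
    unfolding U_def vs_def cpm_2[symmetric] by (rule cpm_segment[OF F(3) cs(1)])
  have edges: "card (induced_edges E (U i)) \<ge> k - 2" if "i \<in> {1..q}" for i
  proof -
    have "finite (U i)" unfolding U_def by simp
    moreover have "cpm E (U i) 2" using cp[of i] unfolding cpm_2 .
    ultimately have "card (U i) \<le> card (induced_edges E (U i)) + 2"
      by (rule cpm_card[OF F(3)])
    then show ?thesis using card1[OF that] by simp
  qed
  show ?thesis unfolding q_def[symmetric]
  proof (rule exI[of _ U], intro conjI)
    show "(\<Union>i\<in>{0..q}. U i) = V" by (rule cover)
    show "\<forall>i\<in>{0..q}. \<forall>j\<in>{0..q}. i \<noteq> j \<longrightarrow> U i \<inter> U j = {}" using disj by blast
    show "\<forall>i\<in>{1..q}. card (U i) = k" using card1 by blast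
    show "card (U 0) < k" by (rule card0)
    show "\<forall>i\<in>{0..q}. cycles_and_two_paths E (U i)" using cp by blast
    show "\<forall>i\<in>{1..q}. k - 2 \<le> card (induced_edges E (U i))" using edges by blast
  qed
qed

end
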